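(* Let $c\in\mathbb{Q}$ with $c<0$, let $n\ge1$, and let $f$ be a $c$-frieze of order $n$ over $\mathbb{Q}$. If $\Sigma\subseteq\mathbb{B}_n$ is a section such that $f(p)>0$ for every $p=(i,j)\in\Sigma$ with $-1\le j-i\le n$ (the points of $\Sigma$ in rows $0,\dots,n+1$), then $f(i,j)>0$ for all $(i,j)\in\mathbb{Z}^2$ with $-1\le j-i\le n$.
   Context: The $c$-continuant polynomials $P_k=P_k^c$ ($k\ge-1$) are defined by $P_{-1}=0$, $P_0=1$, and for $k\ge1$, $P_k(x_1,\dots,x_k)=x_kP_{k-1}(x_1,\dots,x_{k-1})+cP_{k-2}(x_1,\dots,x_{k-2})$. A family $(x_i)_{i\in\mathbb{Z}}$ of rationals is $n$-admissible if $P_{n+2}(x_i,\dots,x_{i+n+1})=0$ for all $i$. Let $\mathbb{B}_n=\{(i,j)\in\mathbb{Z}^2:-2\le j-i\le n+1\}$; the point $(i,j)$ lies in row $j-i+1$. A $c$-frieze of order $n$ over $\mathbb{Q}$ is a function $f:\mathbb{B}_n\to\mathbb{Q}$ for which there is an $n$-admissible family $(x_i)$ with $f(i,j)=P_{j-i+1}(x_i,\dots,x_j)$ for all $(i,j)\in\mathbb{B}_n$ (rows $-1$ and $n+2$ are identically $0$). A section is a subset $\Sigma\subseteq\mathbb{B}_n$ with $|\Sigma|=n+4$ such that for every $(i_0,j_0)\in\Sigma$: (a) if $(i_0,j_0-1)$ and $(i_0+1,j_0)$ lie in $\mathbb{B}_n$, at least one of them is in $\Sigma$; (b) if $(i_0-1,j_0)$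 and $(i_0,j_0+1)$ lie in $\mathbb{B}_n$, at least one of them is in $\Sigma$. *)

theory Defs
  imports Complex_Main
begin

text \<open>c-continuant polynomials: contP c x k = P_k(x 1, ..., x k) for k \<ge> 0
  (P_0 = 1, P_1 = x_1, P_k = x_k P_{k-1} + c P_{k-2}; with P_{-1} = 0 this gives P_1 = x_1).\<close>
fun contP :: "rat \<Rightarrow> (nat \<Rightarrow> rat) \<Rightarrow> nat \<Rightarrow> rat" where
  "contP c x 0 = 1"
| "contP c x (Suc 0) = x 1"
| "contP c x (Suc (Suc k)) = x (Suc (Suc k)) * contP c x (Suc k) + c * contP c x k"

text \<open>P_{j-i+1}(x_i, ..., x_j) for an integer-indexed family, with P_{-1} = 0
  (and value 0 for j - i + 1 < -1, never used).\<close>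
definition contI :: "rat \<Rightarrow> (int \<Rightarrow> rat) \<Rightarrow> int \<Rightarrow> int \<Rightarrow> rat" where
  "contI c x i j = (if j - i + 1 < 0 then 0
                    else contP c (\<lambda>m. x (i + int m - 1)) (nat (j - i + 1)))"

definition admissible :: "rat \<Rightarrow> nat \<Rightarrow> (int \<Rightarrow> rat) \<Rightarrow> bool" where
  "admissible c n x \<longleftrightarrow> (\<forall>i::int. contP c (\<lambda>m. x (i + int m - 1)) (n + 2) = 0)"

definition Bn :: "nat \<Rightarrow> (int \<times> int) set" where
  "Bn n = {(i, j). -2 \<le> j - i \<and> j - i \<le> int n + 1}"

definition is_frieze :: "rat \<Rightarrow> nat \<Rightarrow> (int \<times> int \<Rightarrow> rat) \<Rightarrow> bool" where
  "is_frieze c n f \<longleftrightarrow>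
     (\<exists>x. admissible c n x \<and> (\<forall>(i, j) \<in> Bn n. f (i, j) = contI c x i j))"

definition is_section :: "nat \<Rightarrow> (int \<times> int) set \<Rightarrow> bool" where
  "is_section n S \<longleftrightarrow> S \<subseteq> Bn n \<and> card S = n + 4 \<and>
     (\<forall>(i, j) \<in> S.
        ((i, j - 1) \<in> Bn n \<and> (i + 1, j) \<in> Bn n \<longrightarrow> (i, j - 1) \<in> S \<or> (i + 1, j) \<in> S) \<and>
        ((i - 1, j) \<in> Bn n \<and> (i, j + 1) \<in> Bn n \<longrightarrow> (i - 1, j) \<in> S \<or> (i, j + 1) \<in> S))"

end

theory Submission
  imports Defs
begin

lemma K_neg: "j - i + 1 < 0 \<Longrightarrow> contI c x i j = 0"
  by (simp add: contI_def)

lemma K_zero: "contI c x i (i - 1) = 1"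
  by (simp add: contI_def)

lemma K_rec:
  assumes "i \<le> j"
  shows "contI c x i j = x j * contI c x i (j - 1) + c * contI c x i (j - 2)"
proof (cases "j = i")
  case True then show ?thesis by (simp add: contI_def)
next
  case False
  define k where "k = nat (j - i - 1)"
  have k1: "nat (j - i + 1) = Suc (Suc k)" using assms False by (simp add: k_def)
  have k2: "nat (j - 1 - i + 1) = Suc k" using assms False by (simp add: k_def)
  have k3: "nat (j - 2 - i + 1) = k" using assms False by (simp add: k_def)
  have xj: "x (i + int (Suc (Suc k)) - 1) = x j" using assms False by (simp add: k_def)
  show ?thesis using assms False
    unfolding contI_def k1 k2 k3 by (subst xj[symmetric]) simp
qed

lemma K_det:
  "\<forall>j. j - i + 1 = int m \<longrightarrow>
     contI c x i j * contI c x (i+1) (j+1) - contI c x i (j+1) * contI c x (i+1) j = (-c)^m"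
proof (induction m)
  case 0
  show ?case
  proof (intro allI impI)
    fix j assume "j - i + 1 = int 0"
    hence j: "j = i - 1" by simp
    have "contI c x (i+1) (i-1) = 0" by (rule K_neg) simp
    moreover have "contI c x (i+1) i = 1" using K_zero[of c x "i+1"] by simp
    ultimately show "contI c x i j * contI c x (i+1) (j+1) - contI c x i (j+1) * contI c x (i+1) j = (-c)^0"
      using j by (simp add: K_zero)
  qed
next
  case (Suc m)
  show ?case
  proof (intro allI impI)
    fix j assume jm: "j - i + 1 = int (Suc m)"
    let ?K = "contI c x"
    have IH: "?K i (j-1) * ?K (i+1) j - ?K i j * ?K (i+1) (j-1) = (-c)^m"
    proof -
      have "j - 1 - i + 1 = int m" using jm by simp
      then show ?thesis using Suc.IH[rule_format, of "j-1"] by simp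
    qed
    have r1: "?K (i+1) (j+1) = x (j+1) * ?K (i+1) j + c * ?K (i+1) (j-1)"
      using K_rec[of "i+1" "j+1" c x] jm by simp
    have r2: "?K i (j+1) = x (j+1) * ?K i j + c * ?K i (j-1)"
      using K_rec[of i "j+1" c x] jm by simp
    show "?K i j * ?K (i+1) (j+1) - ?K i (j+1) * ?K (i+1) j = (-c)^(Suc m)"
    proof -
      have "?K i j * ?K (i+1) (j+1) - ?K i (j+1) * ?K (i+1) j
          = -c * (?K i (j-1) * ?K (i+1) j - ?K i j * ?K (i+1) (j-1))"
        unfolding r1 r2 by (simp add: algebra_simps)
      then show ?thesis using IH by simp
    qed
  qed
qed

lemma chain_up:
  fixes a0 t0 hi :: int
  assumes step: "\<And>a t. t0 \<le> t \<Longrightarrow> t < hi \<Longrightarrow> P a t \<Longrightarrow> P (a-1) (t+1) \<or> P a (t+1)"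
    and p0: "P a0 t0"
  shows "t0 + int k \<le> hi \<Longrightarrow> \<exists>g. g t0 = a0 \<and> (\<forall>t. t0 \<le> t \<and> t \<le> t0 + int k \<longrightarrow> P (g t) t)
      \<and> (\<forall>t. t0 \<le> t \<and> t < t0 + int k \<longrightarrow> g (t+1) = g t - 1 \<or> g (t+1) = g t)"
proof (induction k)
  case 0 then show ?case using p0 by (intro exI[of _ "\<lambda>_. a0"]) auto
next
  case (Suc k)
  then obtain g where g: "g t0 = a0" "\<forall>t. t0 \<le> t \<and> t \<le> t0 + int k \<longrightarrow> P (g t) t"
      "\<forall>t. t0 \<le> t \<and> t < t0 + int k \<longrightarrow> g (t+1) = g t - 1 \<or> g (t+1) = g t" by auto
  let ?t = "t0 + int k"
  have "P (g ?t) ?t" using g by auto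
  then have "P (g ?t - 1) (?t+1) \<or> P (g ?t) (?t+1)" using step Suc.prems by auto
  then obtain b where b: "P b (?t+1)" "b = g ?t - 1 \<or> b = g ?t" by blast
  define g' where "g' = g(?t+1 := b)"
  have A: "g' t0 = a0" using g by (simp add: g'_def)
  have B: "\<forall>t. t0 \<le> t \<and> t \<le> t0 + int (Suc k) \<longrightarrow> P (g' t) t"
  proof (intro allI impI)
    fix t assume "t0 \<le> t \<and> t \<le> t0 + int (Suc k)"
    then consider "t0 \<le> t \<and> t \<le> ?t" | "t = ?t + 1" by linarith
    then show "P (g' t) t" using g b by cases (auto simp: g'_def)
  qed
  have C: "\<forall>t. t0 \<le> t \<and> t < t0 + int (Suc k) \<longrightarrow> g' (t+1) = g' t - 1 \<or> g' (t+1) = g' t"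
  proof (intro allI impI)
    fix t assume "t0 \<le> t \<and> t < t0 + int (Suc k)"
    then consider "t0 \<le> t \<and> t < ?t" | "t = ?t" by linarith
    then show "g' (t+1) = g' t - 1 \<or> g' (t+1) = g' t" using g b by cases (auto simp: g'_def)
  qed
  show ?case using A B C by blast
qed

lemma chain_down:
  fixes a0 t0 lo :: int
  assumes step: "\<And>a t. t \<le> t0 \<Longrightarrow> lo < t \<Longrightarrow> P a t \<Longrightarrow> P a (t-1) \<or> P (a+1) (t-1)"
    and p0: "P a0 t0"
  shows "lo \<le> t0 - int k \<Longrightarrow> \<exists>g. g t0 = a0 \<and> (\<forall>t. t0 - int k \<le> t \<and> t \<le> t0 \<longrightarrow> P (g t) t)
      \<and> (\<forall>t. t0 - int k \<le> t \<and> t < t0 \<longrightarrow> g (t+1) = g t - 1 \<or> g (t+1) = g t)"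
proof (induction k)
  case 0 then show ?case using p0 by (intro exI[of _ "\<lambda>_. a0"]) auto
next
  case (Suc k)
  then obtain g where g: "g t0 = a0" "\<forall>t. t0 - int k \<le> t \<and> t \<le> t0 \<longrightarrow> P (g t) t"
      "\<forall>t. t0 - int k \<le> t \<and> t < t0 \<longrightarrow> g (t+1) = g t - 1 \<or> g (t+1) = g t" by auto
  let ?t = "t0 - int k"
  have "P (g ?t) ?t" using g by auto
  then have "P (g ?t) (?t - 1) \<or> P (g ?t + 1) (?t - 1)" using step Suc.prems by auto
  then obtain b where b: "P b (?t - 1)" "g ?t = b - 1 \<or> g ?t = b"
  proof
    assume "P (g ?t) (?t - 1)" then show thesis using that[of "g ?t"] by simp
  next
    assume "P (g ?t + 1) (?t - 1)" then show thesis using that[of "g ?t + 1"] by auto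
  qed
  define g' where "g' = g(?t - 1 := b)"
  have A: "g' t0 = a0" using g by (simp add: g'_def)
  have B: "\<forall>t. t0 - int (Suc k) \<le> t \<and> t \<le> t0 \<longrightarrow> P (g' t) t"
  proof (intro allI impI)
    fix t assume "t0 - int (Suc k) \<le> t \<and> t \<le> t0"
    then consider "?t \<le> t \<and> t \<le> t0" | "t = ?t - 1" by linarith
    then show "P (g' t) t" using g b by cases (auto simp: g'_def)
  qed
  have C: "\<forall>t. t0 - int (Suc k) \<le> t \<and> t < t0 \<longrightarrow> g' (t+1) = g' t - 1 \<or> g' (t+1) = g' t"
  proof (intro allI impI)
    fix t assume "t0 - int (Suc k) \<le> t \<and> t < t0"
    then consider "?t \<le> t \<and> t < t0" | "t = ?t - 1" by linarith
    then show "g' (t+1) = g' t - 1 \<or> g' (t+1) = g' t" using g b by cases (auto simp: g'_def)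
  qed
  show ?case using A B C by blast
qed

lemma chain_exists:
  fixes lo hi t0 a0 :: int
  assumes up: "\<And>a t. lo \<le> t \<Longrightarrow> t < hi \<Longrightarrow> P a t \<Longrightarrow> P (a-1) (t+1) \<or> P a (t+1)"
    and down: "\<And>a t. lo < t \<Longrightarrow> t \<le> hi \<Longrightarrow> P a t \<Longrightarrow> P a (t-1) \<or> P (a+1) (t-1)"
    and p0: "P a0 t0" and r: "lo \<le> t0" "t0 \<le> hi"
  shows "\<exists>g. (\<forall>t. lo \<le> t \<and> t \<le> hi \<longrightarrow> P (g t) t)
      \<and> (\<forall>t. lo \<le> t \<and> t < hi \<longrightarrow> g (t+1) = g t - 1 \<or> g (t+1) = g t)"
proof -
  obtain gu where gu: "gu t0 = a0" "\<forall>t. t0 \<le> t \<and> t \<le> t0 + int (nat (hi - t0)) \<longrightarrow> P (gu t) t"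
      "\<forall>t. t0 \<le> t \<and> t < t0 + int (nat (hi - t0)) \<longrightarrow> gu (t+1) = gu t - 1 \<or> gu (t+1) = gu t"
    using chain_up[of t0 hi P a0 "nat (hi - t0)"] up p0 r by auto
  obtain gd where gd: "gd t0 = a0" "\<forall>t. t0 - int (nat (t0 - lo)) \<le> t \<and> t \<le> t0 \<longrightarrow> P (gd t) t"
      "\<forall>t. t0 - int (nat (t0 - lo)) \<le> t \<and> t < t0 \<longrightarrow> gd (t+1) = gd t - 1 \<or> gd (t+1) = gd t"
    using chain_down[of t0 lo P a0 "nat (t0 - lo)"] down p0 r by auto
  define g where "g t = (if t0 \<le> t then gu t else gd t)" for t
  have "\<forall>t. lo \<le> t \<and> t \<le> hi \<longrightarrow> P (g t) t"
    using gu gd r by (auto simp: g_def)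
  moreover have "\<forall>t. lo \<le> t \<and> t < hi \<longrightarrow> g (t+1) = g t - 1 \<or> g (t+1) = g t"
  proof (intro allI impI)
    fix t assume t: "lo \<le> t \<and> t < hi"
    consider "t0 \<le> t" | "t + 1 < t0" | "t + 1 = t0" by linarith
    then show "g (t+1) = g t - 1 \<or> g (t+1) = g t"
    proof cases
      case 1 then show ?thesis using gu t r by (auto simp: g_def)
    next
      case 2 then show ?thesis using gd t r by (auto simp: g_def)
    next
      case 3 then show ?thesis using gd gu t r by (auto simp: g_def)
    qed
  qed
  ultimately show ?thesis by blast
qed


lemma pos_all:
  fixes K :: "int \<Rightarrow> int \<Rightarrow> rat" and g :: "int \<Rightarrow> int" and n :: nat and c :: rat
  assumes c: "c < 0"
    and det: "\<And>i j. i - 1 \<le> j \<Longrightarrow> K i j * K (i+1) (j+1) - K i (j+1) * K (i+1) j = (-c)^nat(j-i+1)"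
    and row0: "\<And>i. K i (i - 1) = 1"
    and top: "\<And>i. K i (i + int n + 1) = 0"
    and adj: "\<And>t. -2 \<le> t \<Longrightarrow> t < int n + 1 \<Longrightarrow> g (t+1) = g t - 1 \<or> g (t+1) = g t"
    and sec: "\<And>t. -1 \<le> t \<Longrightarrow> t \<le> int n \<Longrightarrow> K (g t) (g t + t) > 0"
    and tr: "-1 \<le> t" "t \<le> int n"
  shows "K i (i + t) > 0"
proof -
  have pc: "(-c)^m > 0" for m using c by simp
  define A where "A = (\<lambda>t. 2 * g t + t) ` {-1..int n}"
  have finA: "finite A" and neA: "A \<noteq> {}" unfolding A_def using tr by auto
  define L where "L = Min A"
  define U where "U = Max A"
  have LU: "L \<le> 2 * g t + t \<and> 2 * g t + t \<le> U" if "-1 \<le> t" "t \<le> int n" for t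
    using that finA unfolding L_def U_def A_def by auto
  have R: "\<forall>i t. -1 \<le> t \<and> t \<le> int n \<and> g t \<le> i \<and> nat (2*i+t-L) = m \<longrightarrow> K i (i+t) > 0" for m
  proof (induction m rule: less_induct)
    case (less m)
    show ?case
    proof (intro allI impI)
      fix i t assume H: "-1 \<le> t \<and> t \<le> int n \<and> g t \<le> i \<and> nat (2*i+t-L) = m"
      have IH': "\<And>i' t'. -1 \<le> t' \<Longrightarrow> t' \<le> int n \<Longrightarrow> g t' \<le> i' \<Longrightarrow> nat(2*i'+t'-L) < m \<Longrightarrow> K i' (i'+t') > 0"
        using less.IH by blast
      show "K i (i+t) > 0"
      proof (cases "i = g t")
        case True thus ?thesis using sec H by auto
      next
        case False
        show ?thesis
        proof (cases "t = -1")
          case True then show ?thesis using row0[of i] by simp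
        next
          case False
          hence t0: "0 \<le> t" using H by auto
          have Lt: "L \<le> 2 * g t + t" using LU H by auto
          have W: "K (i-1) (i-1+t) > 0"
            by (rule IH') (use H \<open>i \<noteq> g t\<close> Lt in auto)
          have a1: "g t = g (t-1) - 1 \<or> g t = g (t-1)" using adj[of "t-1"] H t0 by auto
          have Lt1: "L \<le> 2 * g (t-1) + (t-1)" using LU[of "t-1"] H t0 by auto
          have S: "K i (i+(t-1)) > 0"
            by (rule IH') (use H a1 Lt1 \<open>i \<noteq> g t\<close> t0 in auto)
          have N: "K (i-1) (i+t) \<ge> 0"
          proof (cases "t = int n")
            case True then show ?thesis using top[of "i-1"] by simp
          next
            case False
            have a2: "g (t+1) = g t - 1 \<or> g (t+1) = g t" using adj[of t] H t0 by auto
            have Lt2: "L \<le> 2 * g (t+1) + (t+1)" using LU[of "t+1"] H t0 False by auto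
            have "K (i-1) (i-1+(t+1)) > 0"
              by (rule IH') (use H a2 Lt2 \<open>i \<noteq> g t\<close> t0 False in auto)
            then show ?thesis by (simp add: algebra_simps)
          qed
          have e1: "i - 1 + 1 = i" "i - 1 + t + 1 = i + t" "i - 1 + t - (i - 1) + 1 = t + 1" by simp_all
          have D: "K (i-1) (i-1+t) * K i (i+t) - K (i-1) (i+t) * K i (i+(t-1)) = (-c)^nat(t+1)"
            using det[of "i-1" "i-1+t"] t0 unfolding e1 by (simp add: algebra_simps)
          have "K (i-1) (i-1+t) * K i (i+t) = K (i-1) (i+t) * K i (i+(t-1)) + (-c)^nat(t+1)"
            using D by simp
          also have "\<dots> > 0" using N S pc by (simp add: add_nonneg_pos)
          finally show ?thesis using W zero_less_mult_pos by blast
        qed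
      qed
    qed
  qed
  have Lf: "\<forall>i t. -1 \<le> t \<and> t \<le> int n \<and> i \<le> g t \<and> nat (U-(2*i+t)) = m \<longrightarrow> K i (i+t) > 0" for m
  proof (induction m rule: less_induct)
    case (less m)
    show ?case
    proof (intro allI impI)
      fix i t assume H: "-1 \<le> t \<and> t \<le> int n \<and> i \<le> g t \<and> nat (U-(2*i+t)) = m"
      have IH': "\<And>i' t'. -1 \<le> t' \<Longrightarrow> t' \<le> int n \<Longrightarrow> i' \<le> g t' \<Longrightarrow> nat(U-(2*i'+t')) < m \<Longrightarrow> K i' (i'+t') > 0"
        using less.IH by blast
      show "K i (i+t) > 0"
      proof (cases "i = g t")
        case True thus ?thesis using sec H by auto
      next
        case False
        show ?thesis
        proof (cases "t = -1")
          case True then show ?thesis using row0[of i] by simp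
        next
          case False
          hence t0: "0 \<le> t" using H by auto
          have Ut: "2 * g t + t \<le> U" using LU H by auto
          have E: "K (i+1) (i+1+t) > 0"
            by (rule IH') (use H \<open>i \<noteq> g t\<close> Ut in auto)
          have a1: "g t = g (t-1) - 1 \<or> g t = g (t-1)" using adj[of "t-1"] H t0 by auto
          have Ut1: "2 * g (t-1) + (t-1) \<le> U" using LU[of "t-1"] H t0 by auto
          have S0: "K (i+1) (i+1+(t-1)) > 0"
            by (rule IH') (use H a1 Ut1 \<open>i \<noteq> g t\<close> t0 in auto)
          have S: "K (i+1) (i+t) > 0" using S0 by (simp add: algebra_simps)
          have N: "K i (i+t+1) \<ge> 0"
          proof (cases "t = int n")
            case True then show ?thesis using top[of i] by simp
          next
            case False
            have a2: "g (t+1) = g t - 1 \<or> g (t+1) = g t" using adj[of t] H t0 by auto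
            have Ut2: "2 * g (t+1) + (t+1) \<le> U" using LU[of "t+1"] H t0 False by auto
            have "K i (i+(t+1)) > 0"
              by (rule IH') (use H a2 Ut2 \<open>i \<noteq> g t\<close> t0 False in auto)
            then show ?thesis by (simp add: algebra_simps)
          qed
          have e1: "i + 1 + t = i + t + 1" "i + t - i + 1 = t + 1" by simp_all
          have D: "K i (i+t) * K (i+1) (i+t+1) - K i (i+t+1) * K (i+1) (i+t) = (-c)^nat(t+1)"
            using det[of i "i+t"] t0 unfolding e1 by (simp add: algebra_simps)
          have "K i (i+t) * K (i+1) (i+t+1) = K i (i+t+1) * K (i+1) (i+t) + (-c)^nat(t+1)"
            using D by simp
          also have "\<dots> > 0" using N S pc by (simp add: add_nonneg_pos)
          finally show ?thesis using E e1 zero_less_mult_pos2 by metis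
        qed
      qed
    qed
  qed
  show ?thesis
  proof (cases "g t \<le> i")
    case True then show ?thesis using R[of "nat(2*i+t-L)"] tr by auto
  next
    case False then show ?thesis using Lf[of "nat(U-(2*i+t))"] tr by auto
  qed
qed


theorem mainTheorem5:
  fixes c :: rat and n :: nat and f :: "int \<times> int \<Rightarrow> rat" and S :: "(int \<times> int) set"
  assumes "c < 0" and "n \<ge> 1"
    and "is_frieze c n f"
    and "is_section n S"
    and "\<forall>(i, j) \<in> S. -1 \<le> j - i \<and> j - i \<le> int n \<longrightarrow> f (i, j) > 0"
  shows "\<forall>i j. -1 \<le> j - i \<and> j - i \<le> int n \<longrightarrow> f (i, j) > 0"
proof -
  obtain x where adm: "admissible c n x" and fx: "\<forall>(i, j) \<in> Bn n. f (i, j) = contI c x i j"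
    using assms(3) unfolding is_frieze_def by blast
  have SB: "S \<subseteq> Bn n" and cardS: "card S = n + 4" and
    secS: "\<forall>(i, j) \<in> S.
        ((i, j - 1) \<in> Bn n \<and> (i + 1, j) \<in> Bn n \<longrightarrow> (i, j - 1) \<in> S \<or> (i + 1, j) \<in> S) \<and>
        ((i - 1, j) \<in> Bn n \<and> (i, j + 1) \<in> Bn n \<longrightarrow> (i - 1, j) \<in> S \<or> (i, j + 1) \<in> S)"
    using assms(4) unfolding is_section_def by auto
  have "S \<noteq> {}" using cardS by auto
  then obtain i0 j0 where p0: "(i0, j0) \<in> S" by auto
  have r0: "-2 \<le> j0 - i0" "j0 - i0 \<le> int n + 1" using p0 SB by (auto simp: Bn_def)
  define P where "P a t = ((a, a + t) \<in> S)" for a t :: int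
  have up: "P (a-1) (t+1) \<or> P a (t+1)" if "-2 \<le> t" "t < int n + 1" "P a t" for a t
  proof -
    have "(a, a+t) \<in> S" using that by (simp add: P_def)
    moreover have "(a - 1, a + t) \<in> Bn n" "(a, a + t + 1) \<in> Bn n" using that by (auto simp: Bn_def)
    ultimately have "(a - 1, a + t) \<in> S \<or> (a, a + t + 1) \<in> S" using secS by fastforce
    then show ?thesis by (simp add: P_def add.assoc)
  qed
  have down: "P a (t-1) \<or> P (a+1) (t-1)" if "-2 < t" "t \<le> int n + 1" "P a t" for a t
  proof -
    have "(a, a+t) \<in> S" using that by (simp add: P_def)
    moreover have "(a, a + t - 1) \<in> Bn n" "(a + 1, a + t) \<in> Bn n" using that by (auto simp: Bn_def)
    ultimately have "(a, a + t - 1) \<in> S \<or> (a + 1, a + t) \<in> S" using secS by fastforce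
    then show ?thesis by (simp add: P_def algebra_simps)
  qed
  have "P i0 (j0 - i0)" by (simp add: P_def p0)
  then obtain g where gP: "\<forall>t. -2 \<le> t \<and> t \<le> int n + 1 \<longrightarrow> P (g t) t"
      and gA: "\<forall>t. -2 \<le> t \<and> t < int n + 1 \<longrightarrow> g (t+1) = g t - 1 \<or> g (t+1) = g t"
    using chain_exists[of "-2" "int n + 1" P i0 "j0 - i0"] up down r0 by blast
  let ?K = "contI c x"
  have det: "?K i j * ?K (i+1) (j+1) - ?K i (j+1) * ?K (i+1) j = (-c)^nat(j-i+1)"
    if "i - 1 \<le> j" for i j
    using K_det[of i "nat (j - i + 1)" c x] that by simp
  have row0: "?K i (i - 1) = 1" for i by (rule K_zero)
  have top: "?K i (i + int n + 1) = 0" for i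
  proof -
    have "nat (i + int n + 1 - i + 1) = n + 2" by simp
    then show ?thesis using adm unfolding admissible_def contI_def by simp
  qed
  have sec: "?K (g t) (g t + t) > 0" if "-1 \<le> t" "t \<le> int n" for t
  proof -
    have "(g t, g t + t) \<in> S" using gP that unfolding P_def by auto
    moreover have "(g t, g t + t) \<in> Bn n" using that by (auto simp: Bn_def)
    ultimately show ?thesis using assms(5) fx that by fastforce
  qed
  show ?thesis
  proof (intro allI impI)
    fix i j :: int assume ij: "-1 \<le> j - i \<and> j - i \<le> int n"
    have "?K i (i + (j - i)) > 0"
      by (rule pos_all[where g=g and n=n and c=c]) (use assms(1) det row0 top gA sec ij in auto)
    moreover have "(i, j) \<in> Bn n" using ij by (auto simp: Bn_def)
    ultimately show "f (i, j) > 0" using fx by auto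
  qed
qed

end
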